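(* Let $\trianglerighteq$ denote one of the relations $\ge,\le,=,>,<$ and $\vartriangleleft$ its negation. Let $F\subseteq\bar L^0(\mathcal G)$ and $Y_0\in\bar L^0(\mathcal G)$, and define $$\mathcal A=\{A\in\mathcal G:\ Y\trianglerighteq Y_0\text{ on }A\ \ \forall Y\in F\},\qquad \mathcal A^\vdash=\{A\in\mathcal G:\ \exists Y\in F\text{ with }Y\vartriangleleft Y_0\text{ on }A\}.$$ Assume that for every sequence of pairwise disjoint sets $A_i\in\mathcal A^\vdash$ and $Y_i\in F$ with $Y_i\vartriangleleft Y_0$ on $A_i$, one has $\sum_{i=1}^\infty Y_i\mathbf 1_{A_i}\in F$. Then there exist $A_M\in\mathcal A$ and $A_M^\vdash\in\mathcal A^\vdash$ with $\mathbb P(A_M\cap A_M^\vdash)=0$ and $\mathbb P(A_M\cup A_M^\vdash)=1$; in particular $Y\trianglerighteq Y_0$ on $A_M$ for all $Y\in F$, and $\overline Y\vartriangleleft Y_0$ on $A_M^\vdash$ for some $\overline Y\in F$.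
   Context: $(\Omega,\mathcal F,\mathbb P)$ is a probability space and $\mathcal G\subseteq\mathcal F$ a sub-$\sigma$-algebra. $\bar L^0(\mathcal G)$ denotes $\mathcal G$-measurable random variables with values in $\mathbb R\cup\{+\infty\}$. "$Y\trianglerighteq Y_0$ on $A$" means the relation holds $\mathbb P$-a.s. on $A$. *)

theory Defs
  imports "HOL-Probability.Probability"
begin

definition L0bar :: "'a measure \<Rightarrow> ('a \<Rightarrow> ereal) set" where
  "L0bar G = {X \<in> borel_measurable G. \<forall>\<omega>\<in>space G. X \<omega> \<noteq> -\<infinity>}"

definition holds_on :: "'a measure \<Rightarrow> (ereal \<Rightarrow> ereal \<Rightarrow> bool) \<Rightarrow> ('a \<Rightarrow> ereal) \<Rightarrow> ('a \<Rightarrow> ereal) \<Rightarrow> 'a set \<Rightarrow> bool" where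
  "holds_on M R Y Y0 A \<longleftrightarrow> (AE \<omega> in M. \<omega> \<in> A \<longrightarrow> R (Y \<omega>) (Y0 \<omega>))"

definition setA :: "'a measure \<Rightarrow> 'a measure \<Rightarrow> (ereal \<Rightarrow> ereal \<Rightarrow> bool) \<Rightarrow> ('a \<Rightarrow> ereal) set \<Rightarrow> ('a \<Rightarrow> ereal) \<Rightarrow> 'a set set" where
  "setA M G R F Y0 = {A \<in> sets G. \<forall>Y\<in>F. holds_on M R Y Y0 A}"

definition setA_neg :: "'a measure \<Rightarrow> 'a measure \<Rightarrow> (ereal \<Rightarrow> ereal \<Rightarrow> bool) \<Rightarrow> ('a \<Rightarrow> ereal) set \<Rightarrow> ('a \<Rightarrow> ereal) \<Rightarrow> 'a set set" where
  "setA_neg M G R F Y0 = {A \<in> sets G. \<exists>Y\<in>F. holds_on M (\<lambda>x y. \<not> R x y) Y Y0 A}"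

end

theory Submission
  imports Defs
begin

lemma glue:
  fixes A :: "nat \<Rightarrow> 'a set"
  assumes H: "\<And>A Ys. disjoint_family A \<Longrightarrow> (\<forall>i. A i \<in> setA_neg M G R F Y0) \<Longrightarrow>
           (\<forall>i. Ys i \<in> F \<and> holds_on M (\<lambda>x y. \<not> R x y) (Ys i) Y0 (A i)) \<Longrightarrow>
           (\<lambda>\<omega>. \<Sum>i. Ys i \<omega> * indicator (A i) \<omega>) \<in> F"
    and d: "disjoint_family A" and a: "\<forall>i. A i \<in> setA_neg M G R F Y0"
  shows "(\<Union>i. A i) \<in> setA_neg M G R F Y0"
proof -
  have "\<forall>i. \<exists>Y. Y \<in> F \<and> holds_on M (\<lambda>x y. \<not> R x y) Y Y0 (A i)"
    using a unfolding setA_neg_def by blast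
  then obtain Ys where Ys: "\<forall>i. Ys i \<in> F \<and> holds_on M (\<lambda>x y. \<not> R x y) (Ys i) Y0 (A i)"
    by metis
  define Y where "Y = (\<lambda>\<omega>. \<Sum>i. Ys i \<omega> * indicator (A i) \<omega>)"
  have YF: "Y \<in> F" using H[OF d a Ys] Y_def by simp
  have eq: "Y \<omega> = Ys i \<omega>" if "\<omega> \<in> A i" for i \<omega>
  proof -
    have "(\<lambda>j. Ys j \<omega> * indicator (A j) \<omega>) = (\<lambda>j. if j = i then Ys i \<omega> else 0)"
      using d that by (auto simp: disjoint_family_on_def indicator_def fun_eq_iff)
    moreover have "(\<lambda>j. if j = i then Ys i \<omega> else 0) sums Ys i \<omega>"
      using sums_single[where f="\<lambda>_. Ys i \<omega>" and i=i] by simp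
    ultimately show ?thesis unfolding Y_def by (simp add: sums_unique[symmetric])
  qed
  have "AE \<omega> in M. \<forall>i. \<omega> \<in> A i \<longrightarrow> \<not> R (Ys i \<omega>) (Y0 \<omega>)"
    using Ys by (simp add: holds_on_def AE_all_countable)
  then have "holds_on M (\<lambda>x y. \<not> R x y) Y Y0 (\<Union>i. A i)"
    unfolding holds_on_def by eventually_elim (auto simp: eq)
  moreover have "(\<Union>i. A i) \<in> sets G" using a
    by (intro sets.countable_UN) (auto simp: setA_neg_def)
  ultimately show ?thesis using YF by (auto simp: setA_neg_def)
qed

lemma subset_neg:
  assumes "A \<in> setA_neg M G R F Y0" "B \<in> sets G" "B \<subseteq> A"
  shows "B \<in> setA_neg M G R F Y0"
  using assms unfolding setA_neg_def holds_on_def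
  by (auto elim!: eventually_mono)

theorem mainTheorem7:
  fixes M G :: "'a measure" and R :: "ereal \<Rightarrow> ereal \<Rightarrow> bool"
    and F :: "('a \<Rightarrow> ereal) set" and Y0 :: "'a \<Rightarrow> ereal"
  assumes "prob_space M"
    and "subalgebra M G"
    and "R \<in> {(\<ge>), (\<le>), (=), (>), (<)}"
    and "F \<subseteq> L0bar G" and "F \<noteq> {}"
    and "Y0 \<in> L0bar G"
    and "\<And>A Ys. disjoint_family A \<Longrightarrow> (\<forall>i. A i \<in> setA_neg M G R F Y0) \<Longrightarrow>
           (\<forall>i. Ys i \<in> F \<and> holds_on M (\<lambda>x y. \<not> R x y) (Ys i) Y0 (A i)) \<Longrightarrow>
           (\<lambda>\<omega>. \<Sum>i. Ys i \<omega> * indicator (A i) \<omega>) \<in> F"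
  shows "\<exists>AM \<in> setA M G R F Y0. \<exists>AMn \<in> setA_neg M G R F Y0.
           measure M (AM \<inter> AMn) = 0 \<and> measure M (AM \<union> AMn) = 1 \<and>
           (\<forall>Y\<in>F. holds_on M R Y Y0 AM) \<and>
           (\<exists>Ybar\<in>F. holds_on M (\<lambda>x y. \<not> R x y) Ybar Y0 AMn)"
proof -
  interpret P: prob_space M by fact
  note H = assms(7)
  have sG: "sets G \<subseteq> sets M" and spG: "space G = space M"
    using assms(2) by (auto simp: subalgebra_def)
  let ?N = "setA_neg M G R F Y0"
  define s where "s = (SUP A\<in>?N. measure M A)"
  have emp: "{} \<in> ?N" using assms(5) by (auto simp: setA_neg_def holds_on_def)
  have bdd: "bdd_above ((\<lambda>A. measure M A) ` ?N)"
    by (rule bdd_aboveI[where M=1]) (auto intro: P.prob_le_1)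
  have ub: "measure M A \<le> s" if "A \<in> ?N" for A
    unfolding s_def by (rule cSUP_upper[OF that bdd])
  have "\<forall>n. \<exists>A\<in>?N. s - inverse (real (Suc n)) < measure M A"
  proof
    fix n
    have "s - inverse (real (Suc n)) < s" by simp
    then show "\<exists>A\<in>?N. s - inverse (real (Suc n)) < measure M A"
      unfolding s_def using less_cSUP_iff[OF _ bdd] emp by blast
  qed
  then obtain A where A: "\<And>n. A n \<in> ?N" "\<And>n. s - inverse (real (Suc n)) < measure M (A n)"
    by metis
  have AG: "range A \<subseteq> sets G" using A(1) by (auto simp: setA_neg_def)
  have DN: "disjointed A n \<in> ?N" for n
    using subset_neg[OF A(1) _ disjointed_subset] sets.range_disjointed_sets[OF AG] by auto
  define U where "U = (\<Union>i. A i)"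
  have DN': "\<forall>i. disjointed A i \<in> ?N" using DN by blast
  have "(\<Union>i. disjointed A i) \<in> ?N"
    by (rule glue[OF H disjoint_family_disjointed DN'])
  then have UN: "U \<in> ?N" unfolding U_def UN_disjointed_eq .
  have UG: "U \<in> sets G" using UN by (auto simp: setA_neg_def)
  have UM: "U \<in> sets M" using UG sG by auto
  have sU: "s \<le> measure M U"
  proof (rule ccontr)
    assume "\<not> s \<le> measure M U"
    then obtain n where n: "inverse (real (Suc n)) < s - measure M U"
      using reals_Archimedean[of "s - measure M U"] by auto
    have "measure M (A n) \<le> measure M U"
      using UM AG sG unfolding U_def by (intro P.finite_measure_mono) auto
    with A(2)[of n] n show False by simp
  qed
  define AM where "AM = space M - U"
  have AMG: "AM \<in> sets G" unfolding AM_def using UG spG by (metis sets.compl_sets)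
  have AMA: "AM \<in> setA M G R F Y0"
    unfolding setA_def
  proof (intro CollectI conjI ballI AMG)
    fix Y assume YF: "Y \<in> F"
    show "holds_on M R Y Y0 AM"
    proof (rule ccontr)
      assume nh: "\<not> holds_on M R Y Y0 AM"
      define C where "C = {\<omega> \<in> space M. \<omega> \<in> AM \<and> \<not> R (Y \<omega>) (Y0 \<omega>)}"
      have YG: "Y \<in> borel_measurable G" using YF assms(4) by (auto simp: L0bar_def)
      have Y0G: "Y0 \<in> borel_measurable G" using assms(6) by (auto simp: L0bar_def)
      have pr: "Measurable.pred G (\<lambda>\<omega>. R (Y \<omega>) (Y0 \<omega>))"
      proof -
        from assms(3) have "R = (\<ge>) \<or> R = (\<le>) \<or> R = (=) \<or> R = (>) \<or> R = (<)" by simp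
        then show ?thesis using YG Y0G by (elim disjE; simp; measurable)
      qed
      have CG: "C \<in> sets G"
      proof -
        have "C = {\<omega> \<in> space G. \<omega> \<in> AM \<and> \<not> R (Y \<omega>) (Y0 \<omega>)}" using spG C_def by simp
        also have "\<dots> \<in> sets G" using pr AMG by measurable
        finally show ?thesis .
      qed
      have CM: "C \<in> sets M" using CG sG by auto
      have "C \<notin> null_sets M"
        using nh CM unfolding holds_on_def C_def by (subst AE_iff_null_sets) auto
      then have Cpos: "measure M C > 0"
        using CM P.emeasure_eq_measure by (auto simp: null_sets_def zero_less_measure_iff)
      have CN: "C \<in> ?N" using CG YF unfolding setA_neg_def holds_on_def C_def by auto
      define B where "B = (\<lambda>i::nat. if i = 0 then U else if i = 1 then C else {})"
      have dB: "disjoint_family B"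
        unfolding disjoint_family_on_def B_def C_def AM_def by auto
      have BN: "\<forall>i. B i \<in> ?N" using UN CN emp unfolding B_def by auto
      have BU: "(\<Union>i. B i) = U \<union> C"
        unfolding B_def by (auto split: if_splits)
      have UCN: "U \<union> C \<in> ?N" using glue[OF H dB BN] unfolding BU .
      have "U \<inter> C = {}" unfolding C_def AM_def by auto
      then have "measure M (U \<union> C) = measure M U + measure M C"
        using UM CM by (simp add: P.finite_measure_Union)
      with ub[OF UCN] sU Cpos show False by simp
    qed
  qed
  have "U \<subseteq> space M" using UM sets.sets_into_space by auto
  then have "AM \<inter> U = {}" "AM \<union> U = space M" unfolding AM_def by auto
  moreover obtain Yb where "Yb \<in> F" "holds_on M (\<lambda>x y. \<not> R x y) Yb Y0 U"
    using UN by (auto simp: setA_neg_def)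
  ultimately show ?thesis
    apply (intro bexI[OF _ AMA] bexI[OF _ UN] conjI)
    using AMA P.prob_space by (auto simp: setA_def)
qed

end
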